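(* Let $m,n\ge1$, $A,B\in\mathbb{R}_+^{m\times n}$, and suppose $\hat\rho(A,B)<\infty$. Write $t_0=\hat\rho(A,B)$. (1) If $\mathbf{y}\in\mathbb{R}^n_+\setminus\{\mathbf{0}\}$ is weakly optimal, then at least one coordinate of $(A-t_0B)\mathbf{y}$ is zero. (2) Suppose $\mathbf{y}$ is weakly optimal with exactly $\ell$ positive coordinates, and let $A',B'\in\mathbb{R}_+^{m\times\ell}$ be the submatrices of $A,B$ formed by the columns indexed by $\operatorname{supp}\mathbf{y}$. If $\ell\ge m$, then $\operatorname{rank}(A'-t_0B')<m$. (3) Every minimal weakly optimal vector has at most $m$ positive coordinates. (4) If $\mathbf{y}$ is minimal weakly optimal with exactly $m$ positive coordinates, then $\mathbf{y}$ is a weak GPF-eigenvector, i.e. $A\mathbf{y}=t_0B\mathbf{y}$, and $\operatorname{rank}(A'-t_0B')=m-1$, with $A',B'$ as in (2). (5) If $\mathbf{y}'$ is minimal weakly optimal with $\ell<m$ positive coordinates, then there exists a minimal weakly optimal $\mathbf{y}$ with $\operatorname{supp}\mathbf{y}=\operatorname{supp}\mathbf{y}'$ such that the set $\mathcal{K}=\{k\in[m]:(A\mathbf{y})_k=t_0(B\mathbf{y})_k\}$ has $|\mathcal{K}|\ge\ell$.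
   Context: $[m]=\{1,\dots,m\}$. For $A,B\in\mathbb{R}_+^{m\times n}$ (entrywise nonnegative real matrices) and $\mathbf{x}\in\mathbb{R}^n_+\setminus\{\mathbf{0}\}$, set $r(A,B,\mathbf{x})=\max_{i\in[m]}\frac{(A\mathbf{x})_i}{(B\mathbf{x})_i}\in[0,\infty]$ with the conventions $\frac00=0$ and $\frac c0=\infty$ for $c>0$; equivalently $r(A,B,\mathbf{x})=\inf\{t\ge 0: A\mathbf{x}\le tB\mathbf{x}\}$. The weak Collatz–Wielandt quotient is $\hat\rho(A,B)=\inf\{r(A,B,\mathbf{x}):\mathbf{x}\in\mathbb{R}^n_+\setminus\{\mathbf{0}\}\}$. A vector $\mathbf{y}\in\mathbb{R}^n_+\setminus\{\mathbf{0}\}$ is weakly optimal if $r(A,B,\mathbf{y})=\hat\rho(A,B)$; it is minimal weakly optimal if it is weakly optimal and no weakly optimal vector has support strictly contained in $\operatorname{supp}\mathbf{y}=\{j:y_j>0\}$. A weak GPF-eigenvector is $\mathbf{y}\in\mathbb{R}^n_+\setminus\{\mathbf{0}\}$ with $A\mathbf{y}=\hat\rho(A,B)B\mathbf{y}$. *)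

theory Defs
  imports "Jordan_Normal_Form.DL_Rank" "Jordan_Normal_Form.DL_Submatrix"
          "HOL-Library.Extended_Real"
begin

definition nonneg_mat :: "real mat \<Rightarrow> bool" where
  "nonneg_mat A \<longleftrightarrow> (\<forall>i < dim_row A. \<forall>j < dim_col A. 0 \<le> A $$ (i,j))"

definition nonneg_vec :: "real vec \<Rightarrow> bool" where
  "nonneg_vec x \<longleftrightarrow> (\<forall>j < dim_vec x. 0 \<le> x $ j)"

text \<open>Quotient c/d in [0,\<infinity>] with conventions 0/0 = 0 and c/0 = \<infinity> for c > 0.\<close>
definition equot :: "real \<Rightarrow> real \<Rightarrow> ereal" where
  "equot c d = (if d = 0 then (if c = 0 then 0 else \<infinity>) else ereal (c / d))"

definition rCW :: "real mat \<Rightarrow> real mat \<Rightarrow> real vec \<Rightarrow> ereal" where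
  "rCW A B x = Max ((\<lambda>i. equot ((A *\<^sub>v x) $ i) ((B *\<^sub>v x) $ i)) ` {..<dim_row A})"

definition admissible :: "real mat \<Rightarrow> real vec \<Rightarrow> bool" where
  "admissible A x \<longleftrightarrow> x \<in> carrier_vec (dim_col A) \<and> nonneg_vec x \<and> x \<noteq> 0\<^sub>v (dim_col A)"

definition rho_hat :: "real mat \<Rightarrow> real mat \<Rightarrow> ereal" where
  "rho_hat A B = (INF x \<in> {x. admissible A x}. rCW A B x)"

definition supp :: "real vec \<Rightarrow> nat set" where
  "supp y = {j. j < dim_vec y \<and> 0 < y $ j}"

definition weakly_optimal :: "real mat \<Rightarrow> real mat \<Rightarrow> real vec \<Rightarrow> bool" where
  "weakly_optimal A B y \<longleftrightarrow> admissible A y \<and> rCW A B y = rho_hat A B"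

definition minimal_weakly_optimal :: "real mat \<Rightarrow> real mat \<Rightarrow> real vec \<Rightarrow> bool" where
  "minimal_weakly_optimal A B y \<longleftrightarrow> weakly_optimal A B y \<and>
     \<not> (\<exists>z. weakly_optimal A B z \<and> supp z \<subset> supp y)"

definition weak_GPF_eigenvector :: "real mat \<Rightarrow> real mat \<Rightarrow> real vec \<Rightarrow> bool" where
  "weak_GPF_eigenvector A B y \<longleftrightarrow> admissible A y \<and>
     rho_hat A B < \<infinity> \<and> A *\<^sub>v y = real_of_ereal (rho_hat A B) \<cdot>\<^sub>v (B *\<^sub>v y)"

definition col_submatrix :: "real mat \<Rightarrow> nat set \<Rightarrow> real mat" where
  "col_submatrix A J = submatrix A {..<dim_row A} J"

end

theory Submission
  imports Defs "Jordan_Normal_Form.DL_Rank_Submatrix"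
begin


lemma Mx_index:
  fixes A B :: "real mat"
  assumes "A \<in> carrier_mat m n" "B \<in> carrier_mat m n" "x \<in> carrier_vec n" "i < m"
  shows "((A - t \<cdot>\<^sub>m B) *\<^sub>v x) $ i = (A *\<^sub>v x) $ i - t * (B *\<^sub>v x) $ i"
  using assms
proof -
  have "(\<Sum>j = 0..<n. (A $$ (i, j) - t * B $$ (i, j)) * x $ j) =
        (\<Sum>j = 0..<n. A $$ (i, j) * x $ j - t * (B $$ (i, j) * x $ j))"
    by (rule sum.cong) (auto simp: algebra_simps)
  also have "\<dots> = (\<Sum>j = 0..<n. A $$ (i, j) * x $ j) - t * (\<Sum>j = 0..<n. B $$ (i, j) * x $ j)"
    by (simp add: sum_subtractf sum_distrib_left)
  finally show ?thesis using assms by (simp add: mult_mat_vec_def scalar_prod_def)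
qed

lemma mat_vec_nonneg:
  fixes A :: "real mat"
  assumes "A \<in> carrier_mat m n" "nonneg_mat A" "nonneg_vec x" "x \<in> carrier_vec n" "i < m"
  shows "0 \<le> (A *\<^sub>v x) $ i"
  using assms unfolding nonneg_mat_def nonneg_vec_def
  by (auto simp: mult_mat_vec_def scalar_prod_def intro!: sum_nonneg)

lemma equot_nonneg: "0 \<le> c \<Longrightarrow> 0 \<le> d \<Longrightarrow> 0 \<le> equot c d"
  unfolding equot_def by auto

lemma equot_le:
  assumes "0 \<le> c" "0 \<le> d" "0 \<le> t"
  shows "equot c d \<le> ereal t \<longleftrightarrow> c \<le> t * d"
  using assms by (auto simp: equot_def field_simps)

lemma equot_less:
  assumes "0 \<le> c" "0 \<le> d" "c < t * d"
  shows "equot c d < ereal t"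
  using assms by (auto simp: equot_def field_simps)

locale cw =
  fixes A B :: "real mat" and m n :: nat
  assumes m1: "1 \<le> m" and n1: "1 \<le> n" and A: "A \<in> carrier_mat m n" and B: "B \<in> carrier_mat m n"
    and nA: "nonneg_mat A" and nB: "nonneg_mat B" and fin: "rho_hat A B < \<infinity>"
begin

definition t0 where "t0 = real_of_ereal (rho_hat A B)"
definition dv :: "real vec \<Rightarrow> nat \<Rightarrow> real" where "dv x i = (A *\<^sub>v x) $ i - t0 * (B *\<^sub>v x) $ i"

lemma dimA[simp]: "dim_row A = m" "dim_col A = n" using A by auto

lemma ne: "{..<m} \<noteq> {}"
proof
  assume "{..<m} = {}"
  moreover have "0 \<in> {..<m}" using m1 by simp
  ultimately show False by blast
qed

lemma adm_iff: "admissible A x \<longleftrightarrow> x \<in> carrier_vec n \<and> nonneg_vec x \<and> x \<noteq> 0\<^sub>v n"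
  unfolding admissible_def by simp

lemma Ax_nonneg: "admissible A x \<Longrightarrow> i < m \<Longrightarrow> 0 \<le> (A *\<^sub>v x) $ i"
  using mat_vec_nonneg[OF A nA] adm_iff by blast
lemma Bx_nonneg: "admissible A x \<Longrightarrow> i < m \<Longrightarrow> 0 \<le> (B *\<^sub>v x) $ i"
  using mat_vec_nonneg[OF B nB] adm_iff by blast

lemma rCW_nonneg: assumes "admissible A x" shows "0 \<le> rCW A B x"
proof -
  have "0 \<le> equot ((A *\<^sub>v x) $ 0) ((B *\<^sub>v x) $ 0)"
    using equot_nonneg Ax_nonneg[OF assms] Bx_nonneg[OF assms] m1 by simp
  also have "\<dots> \<le> rCW A B x" unfolding rCW_def
    by (rule Max_ge) (use m1 in auto)
  finally show ?thesis .
qed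

lemma rho_ge0: "0 \<le> rho_hat A B"
  unfolding rho_hat_def by (rule INF_greatest) (use rCW_nonneg in auto)

lemma rho_eq: "rho_hat A B = ereal t0"
  using rho_ge0 fin unfolding t0_def by (cases "rho_hat A B") auto

lemma t0_nonneg: "0 \<le> t0"
  using rho_ge0 rho_eq by simp

lemma rho_le: "admissible A x \<Longrightarrow> rho_hat A B \<le> rCW A B x"
  unfolding rho_hat_def by (rule INF_lower) simp

lemma rCW_le_iff: assumes "admissible A x"
  shows "rCW A B x \<le> ereal t0 \<longleftrightarrow> (\<forall>i<m. dv x i \<le> 0)"
proof -
  have "rCW A B x \<le> ereal t0 \<longleftrightarrow> (\<forall>i<m. equot ((A *\<^sub>v x) $ i) ((B *\<^sub>v x) $ i) \<le> ereal t0)"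
    unfolding rCW_def using ne by (subst Max_le_iff) auto
  also have "\<dots> \<longleftrightarrow> (\<forall>i<m. dv x i \<le> 0)"
    using equot_le Ax_nonneg[OF assms] Bx_nonneg[OF assms] t0_nonneg unfolding dv_def
    by (auto simp: mult.commute)
  finally show ?thesis .
qed

lemma rCW_less: assumes "admissible A x" "\<forall>i<m. dv x i < 0"
  shows "rCW A B x < ereal t0"
  unfolding rCW_def using ne assms equot_less Ax_nonneg[OF assms(1)] Bx_nonneg[OF assms(1)]
  by (subst Max_less_iff) (auto simp: dv_def mult.commute)

lemma wo_iff: "weakly_optimal A B x \<longleftrightarrow> admissible A x \<and> (\<forall>i<m. dv x i \<le> 0)"
  unfolding weakly_optimal_def rho_eq
  using rCW_le_iff rho_le rho_eq by (metis order.antisym order.refl)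

lemma no_strict: "admissible A x \<Longrightarrow> \<exists>i<m. 0 \<le> dv x i"
  using rCW_less rho_le rho_eq by (metis leD not_le_imp_less)

end



lemma card_lt_in: "finite T \<Longrightarrow> j \<in> T \<Longrightarrow> card {a\<in>T. a < j} < card (T::nat set)"
proof -
  assume f: "finite T" and j: "j \<in> T"
  have "{a\<in>T. a < j} \<subseteq> T - {j}" by auto
  then have "card {a\<in>T. a < j} \<le> card (T - {j})" using f by (intro card_mono) auto
  also have "\<dots> < card T" using f j by (rule card_Diff1_less)
  finally show ?thesis .
qed

lemma pick_bij: "finite (T::nat set) \<Longrightarrow> bij_betw (pick T) {..<card T} T"
proof -
  assume fin: "finite T"
  have "inj_on (pick T) {..<card T}"
  proof (rule inj_onI)
    fix x y assume x: "x \<in> {..<card T}" and y: "y \<in> {..<card T}" and e: "pick T x = pick T y"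
    show "x = y"
    proof (rule ccontr)
      assume "x \<noteq> y"
      then have "x < y \<or> y < x" by arith
      moreover have "x < y \<Longrightarrow> pick T x < pick T y" using y by (intro pick_mono) auto
      moreover have "y < x \<Longrightarrow> pick T y < pick T x" using x by (intro pick_mono) auto
      ultimately show False using e by auto
    qed
  qed
  moreover have "pick T ` {..<card T} = T"
  proof
    show "pick T ` {..<card T} \<subseteq> T"
    proof
      fix x assume "x \<in> pick T ` {..<card T}"
      then obtain k where k: "k < card T" "x = pick T k" by auto
      show "x \<in> T" using pick_in_set[where n=k and S=T] k by simp
    qed
  next
    show "T \<subseteq> pick T ` {..<card T}"
    proof
      fix j assume j: "j \<in> T"
      have "card {a\<in>T. a < j} < card T" using fin j by (rule card_lt_in)
      then have "pick T (card {a\<in>T. a < j}) \<in> pick T ` {..<card T}" by simp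
      then show "j \<in> pick T ` {..<card T}" using pick_card_in_set[OF j] by simp
    qed
  qed
  ultimately show ?thesis unfolding bij_betw_def by blast
qed

definition ext :: "nat \<Rightarrow> nat set \<Rightarrow> real vec \<Rightarrow> real vec" where
  "ext c S u = vec c (\<lambda>j. if j \<in> S then u $ card {a\<in>S. a < j} else 0)"

lemma ext_carrier[simp]: "ext c S u \<in> carrier_vec c" unfolding ext_def by simp
lemma ext_dim[simp]: "dim_vec (ext c S u) = c" unfolding ext_def by simp
lemma ext_out: "j < c \<Longrightarrow> j \<notin> S \<Longrightarrow> ext c S u $ j = 0" unfolding ext_def by simp
lemma ext_pick: "S \<subseteq> {..<c} \<Longrightarrow> k < card S \<Longrightarrow> ext c S u $ pick S k = u $ k"
proof -
  assume S: "S \<subseteq> {..<c}" and k: "k < card S"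
  have "pick S k \<in> S" using pick_in_set k by blast
  moreover then have "pick S k < c" using S by auto
  ultimately show ?thesis unfolding ext_def using card_pick[of k S] k by simp
qed

lemma card_S: "S \<subseteq> {..<c::nat} \<Longrightarrow> card {j. j < c \<and> j \<in> S} = card S"
proof -
  assume "S \<subseteq> {..<c}"
  then have "{j. j < c \<and> j \<in> S} = S" by auto
  then show ?thesis by simp
qed

lemma submatrix_carrier: "N \<in> carrier_mat r c \<Longrightarrow> S \<subseteq> {..<c::nat} \<Longrightarrow>
  submatrix N UNIV S \<in> carrier_mat r (card S)"
  using card_S[of S c] by (auto simp: dim_submatrix)

lemma sub_mult:
  fixes N :: "real mat"
  assumes N: "N \<in> carrier_mat r c" and S: "S \<subseteq> {..<c}" and u: "u \<in> carrier_vec (card S)"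
  shows "submatrix N UNIV S *\<^sub>v u = N *\<^sub>v ext c S u"
proof (rule eq_vecI)
  have fin: "finite S" using S finite_subset by blast
  have cs: "card {j. j < c \<and> j \<in> S} = card S" using card_S[OF S] .
  show "dim_vec (submatrix N UNIV S *\<^sub>v u) = dim_vec (N *\<^sub>v ext c S u)"
    using N by (simp add: dim_submatrix)
  fix i assume "i < dim_vec (N *\<^sub>v ext c S u)"
  then have i: "i < r" using N by simp
  have "(N *\<^sub>v ext c S u) $ i = (\<Sum>j\<in>{0..<c}. N $$ (i,j) * ext c S u $ j)"
    using N i by (simp add: mult_mat_vec_def scalar_prod_def)
  also have "\<dots> = (\<Sum>j\<in>S. N $$ (i,j) * ext c S u $ j)"
    by (rule sum.mono_neutral_right) (use S fin ext_out in auto)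
  also have "\<dots> = (\<Sum>k\<in>{..<card S}. N $$ (i, pick S k) * ext c S u $ pick S k)"
    by (rule sum.reindex_bij_betw[OF pick_bij[OF fin], symmetric])
  also have "\<dots> = (\<Sum>k\<in>{..<card S}. N $$ (i, pick S k) * u $ k)"
    using ext_pick[OF S] by simp
  also have "\<dots> = (submatrix N UNIV S *\<^sub>v u) $ i"
    using N i u cs by (auto simp: mult_mat_vec_def scalar_prod_def dim_submatrix submatrix_index pick_UNIV
       lessThan_atLeast0 intro!: sum.cong)
  finally show "(submatrix N UNIV S *\<^sub>v u) $ i = (N *\<^sub>v ext c S u) $ i" by simp
qed

lemma pick_lessThan: "i < (m::nat) \<Longrightarrow> pick {..<m} i = i"
proof -
  assume i: "i < m"
  have "{a\<in>{..<m}. a < i} = {..<i}" using i by auto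
  then show ?thesis using pick_card_in_set[of i "{..<m}"] i by simp
qed

lemma col_sub_eq:
  fixes A B :: "real mat"
  assumes "A \<in> carrier_mat m n" "B \<in> carrier_mat m n"
  shows "col_submatrix A S - t \<cdot>\<^sub>m col_submatrix B S = submatrix (A - t \<cdot>\<^sub>m B) UNIV S"
proof -
  have rA: "card {i. i < dim_row A \<and> i \<in> {..<dim_row A}} = m" using assms by simp
  have rB: "card {i. i < dim_row B \<and> i \<in> {..<dim_row B}} = m" using assms by simp
  have rM: "card {i. i < dim_row (A - t \<cdot>\<^sub>m B) \<and> i \<in> UNIV} = m" using assms by simp
  let ?c = "card {j. j < n \<and> j \<in> S}"
  show ?thesis unfolding col_submatrix_def
  proof (rule eq_matI)
    show "dim_row (submatrix A {..<dim_row A} S - t \<cdot>\<^sub>m submatrix B {..<dim_row B} S) =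
      dim_row (submatrix (A - t \<cdot>\<^sub>m B) UNIV S)" using assms by (simp add: dim_submatrix)
    show "dim_col (submatrix A {..<dim_row A} S - t \<cdot>\<^sub>m submatrix B {..<dim_row B} S) =
      dim_col (submatrix (A - t \<cdot>\<^sub>m B) UNIV S)" using assms by (simp add: dim_submatrix)
    fix i j assume i: "i < dim_row (submatrix (A - t \<cdot>\<^sub>m B) UNIV S)"
      and j: "j < dim_col (submatrix (A - t \<cdot>\<^sub>m B) UNIV S)"
    have i': "i < m" using i assms by (simp add: dim_submatrix)
    have j': "j < ?c" using j assms by (simp add: dim_submatrix)
    have pj: "pick S j < n" using pick_le j' by blast
    have "(submatrix A {..<dim_row A} S - t \<cdot>\<^sub>m submatrix B {..<dim_row B} S) $$ (i, j)
       = submatrix A {..<dim_row A} S $$ (i,j) - t * submatrix B {..<dim_row B} S $$ (i,j)"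
      using i' j' assms by (simp add: dim_submatrix)
    also have "\<dots> = A $$ (i, pick S j) - t * B $$ (i, pick S j)"
      using i' j' assms by (simp add: submatrix_index pick_lessThan)
    also have "\<dots> = submatrix (A - t \<cdot>\<^sub>m B) UNIV S $$ (i, j)"
      using i' j' assms pj by (simp add: submatrix_index pick_UNIV)
    finally show "(submatrix A {..<dim_row A} S - t \<cdot>\<^sub>m submatrix B {..<dim_row B} S) $$ (i, j) =
      submatrix (A - t \<cdot>\<^sub>m B) UNIV S $$ (i, j)" .
  qed
qed




context vec_space begin

lemma max_ex: obtains S0 where "maximal S0 (\<lambda>T. T \<subseteq> set (cols X) \<and> lin_indpt T)"
  using maximal_exists[of "(\<lambda>T. T \<subseteq> set (cols X) \<and> lin_indpt T)" "card (set (cols X))" "{}"]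
  by (meson List.finite_set card_mono empty_iff empty_subsetI finite_lin_indpt2 rev_finite_subset)

lemma rank_le_rows: assumes X: "X \<in> carrier_mat n nc" shows "rank X \<le> n"
proof -
  obtain S0 where S0: "maximal S0 (\<lambda>T. T \<subseteq> set (cols X) \<and> lin_indpt T)" using max_ex by blast
  have r: "rank X = card S0" using rank_card_indpt[OF X S0] .
  have "S0 \<subseteq> set (cols X)" "lin_indpt S0" using S0 unfolding maximal_def by auto
  moreover have "set (cols X) \<subseteq> carrier_vec n" using X cols_dim by blast
  ultimately have "card S0 \<le> dim" using li_le_dim(2)[of S0] by auto
  then show ?thesis using r dim_is_n by simp
qed

lemma rank_full_surj: assumes X: "X \<in> carrier_mat n nc" and r: "rank X = n" and b: "b \<in> carrier_vec n"
  shows "\<exists>u\<in>carrier_vec nc. X *\<^sub>v u = b"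
proof -
  obtain S0 where S0: "maximal S0 (\<lambda>T. T \<subseteq> set (cols X) \<and> lin_indpt T)" using max_ex by blast
  have c: "card S0 = n" using rank_card_indpt[OF X S0] r by simp
  have sub: "S0 \<subseteq> set (cols X)" and li: "lin_indpt S0" using S0 unfolding maximal_def by auto
  have cv: "set (cols X) \<subseteq> carrier_vec n" using X cols_dim by blast
  have fin: "finite S0" using sub finite_subset by blast
  have "basis S0" by (rule dim_li_is_basis) (use fin sub cv li c dim_is_n in auto)
  then have "span S0 = carrier_vec n" unfolding basis_def by simp
  moreover have "span S0 \<subseteq> span (set (cols X))" by (rule span_is_monotone[OF sub])
  ultimately have "b \<in> col_space X" using b unfolding col_space_def by auto
  then show ?thesis using col_space_eq[OF X] X by auto
qed

lemma rank_sub_le: assumes X: "X \<in> carrier_mat n nc"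
  shows "rank (submatrix X UNIV J) \<le> rank X"
proof -
  let ?Y = "submatrix X UNIV J"
  have Y: "?Y \<in> carrier_mat n (dim_col ?Y)" using X unfolding carrier_mat_def by (simp add: dim_submatrix)
  obtain S0 where S0: "maximal S0 (\<lambda>T. T \<subseteq> set (cols ?Y) \<and> lin_indpt T)" using max_ex by blast
  have r: "rank ?Y = card S0" using rank_card_indpt[OF Y S0] .
  have s1: "S0 \<subseteq> set (cols ?Y)" and li: "lin_indpt S0" using S0 unfolding maximal_def by auto
  have s2: "S0 \<subseteq> set (cols X)" using s1 cols_submatrix_subset[of X J] by (rule subset_trans)
  have "card S0 \<le> rank X" using rank_ge_card_indpt[OF X s2 li] .
  then show ?thesis using r by simp
qed

end

lemma nondistinct_kernel:
  fixes X :: "real mat"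
  assumes X: "X \<in> carrier_mat r k" and nd: "\<not> distinct (cols X)"
  shows "\<exists>v\<in>carrier_vec k. v \<noteq> 0\<^sub>v k \<and> X *\<^sub>v v = 0\<^sub>v r"
proof -
  obtain a b where ab: "a < k" "b < k" "cols X ! a = cols X ! b" "a \<noteq> b"
    using nd X distinct_conv_nth cols_length by (metis carrier_matD(2))
  define v where "v = vec k (\<lambda>j. if j = a then 1 else if j = b then -1 else (0::real))"
  have "v $ a = 1" using ab unfolding v_def by simp
  then have "v \<noteq> 0\<^sub>v k" using ab by (metis index_zero_vec(1) zero_neq_one)
  moreover have "X *\<^sub>v v = 0\<^sub>v r"
  proof (rule eq_vecI)
    show "dim_vec (X *\<^sub>v v) = dim_vec (0\<^sub>v r)" using X by simp
    fix i assume "i < dim_vec (0\<^sub>v r)"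
    then have i: "i < r" by simp
    have "(X *\<^sub>v v) $ i = (\<Sum>j\<in>{0..<k}. X $$ (i,j) * v $ j)"
      using X i by (simp add: mult_mat_vec_def scalar_prod_def v_def)
    also have "\<dots> = (\<Sum>j\<in>{0..<k}. (if j = a then X $$ (i,j) else 0) - (if j = b then X $$ (i,j) else 0))"
      by (rule sum.cong) (use ab in \<open>auto simp: v_def\<close>)
    also have "\<dots> = X $$ (i,a) - X $$ (i,b)"
      using ab by (simp add: sum_subtractf)
    also have "\<dots> = 0"
    proof -
      have "col X a $ i = col X b $ i" using ab X by (metis carrier_matD(2) cols_nth)
      then show ?thesis using X i ab by simp
    qed
    finally show "(X *\<^sub>v v) $ i = 0\<^sub>v r $ i" using i by simp
  qed
  ultimately show ?thesis unfolding v_def by auto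
qed

lemma kernel_lowrank:
  fixes X :: "real mat"
  assumes X: "X \<in> carrier_mat r k" and rk: "vec_space.rank r X < k"
  shows "\<exists>v\<in>carrier_vec k. v \<noteq> 0\<^sub>v k \<and> X *\<^sub>v v = 0\<^sub>v r"
proof (cases "distinct (cols X)")
  case True
  show ?thesis
  proof (cases "module.lin_dep class_ring (module_vec TYPE(real) r) (set (cols X))")
    case dep: True
    show ?thesis using vec_space.lin_depE[OF X dep True] by blast
  next
    case False
    then have "vec_space.rank r X = k" using vec_space.lin_indpt_full_rank[OF X True] by blast
    then show ?thesis using rk by simp
  qed
next
  case False
  then show ?thesis using nondistinct_kernel[OF X] by blast
qed

lemma kernel_last:
  fixes X :: "real mat"
  assumes X: "X \<in> carrier_mat r c" and c: "1 \<le> c" and rk: "vec_space.rank r X < c - 1"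
  shows "\<exists>u\<in>carrier_vec c. u \<noteq> 0\<^sub>v c \<and> u $ (c - 1) = 0 \<and> X *\<^sub>v u = 0\<^sub>v r"
proof -
  let ?J = "{..<c-1}"
  have J: "?J \<subseteq> {..<c}" by auto
  have cJ: "card ?J = c - 1" by simp
  let ?Y = "submatrix X UNIV ?J"
  have Y: "?Y \<in> carrier_mat r (c - 1)" using submatrix_carrier[OF X J] cJ by simp
  have "vec_space.rank r ?Y < c - 1" using vec_space.rank_sub_le[OF X, of ?J] rk by simp
  then obtain v where v: "v \<in> carrier_vec (c-1)" "v \<noteq> 0\<^sub>v (c-1)" "?Y *\<^sub>v v = 0\<^sub>v r"
    using kernel_lowrank[OF Y] by blast
  define u where "u = ext c ?J v"
  have "?Y *\<^sub>v v = X *\<^sub>v u" unfolding u_def by (rule sub_mult[OF X J]) (use v cJ in simp)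
  moreover have "u $ (c - 1) = 0" unfolding u_def using c by (intro ext_out) auto
  moreover have "u \<noteq> 0\<^sub>v c"
  proof
    assume u0: "u = 0\<^sub>v c"
    have "v = 0\<^sub>v (c-1)"
    proof (rule eq_vecI)
      fix k assume "k < dim_vec (0\<^sub>v (c - 1))"
      then have k: "k < c - 1" by simp
      have "u $ pick ?J k = v $ k" unfolding u_def using ext_pick[OF J, of k v] k cJ by simp
      moreover have "pick ?J k = k" using pick_lessThan k by blast
      ultimately show "v $ k = 0\<^sub>v (c - 1) $ k" using u0 k by simp
    qed (use v in simp)
    then show False using v by simp
  qed
  ultimately show ?thesis using v unfolding u_def by auto
qed




lemma lin_mv:
  fixes X :: "real mat"
  assumes "X \<in> carrier_mat r c" "x \<in> carrier_vec c" "z \<in> carrier_vec c" "i < r"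
  shows "(X *\<^sub>v (x + s \<cdot>\<^sub>v z)) $ i = (X *\<^sub>v x) $ i + s * (X *\<^sub>v z) $ i"
proof -
  have "(\<Sum>j = 0..<c. X $$ (i, j) * (x $ j + s * z $ j)) =
        (\<Sum>j = 0..<c. X $$ (i, j) * x $ j + s * (X $$ (i, j) * z $ j))"
    by (rule sum.cong) (auto simp: algebra_simps)
  also have "\<dots> = (\<Sum>j = 0..<c. X $$ (i, j) * x $ j) + s * (\<Sum>j = 0..<c. X $$ (i, j) * z $ j)"
    by (simp add: sum.distrib sum_distrib_left)
  finally show ?thesis using assms by (simp add: mult_mat_vec_def scalar_prod_def)
qed

lemma eps_exists:
  fixes a b :: "'i \<Rightarrow> real"
  assumes "finite I" "\<forall>i\<in>I. 0 < a i"
  shows "\<exists>\<epsilon>>0. \<forall>e. 0 < e \<and> e \<le> \<epsilon> \<longrightarrow> (\<forall>i\<in>I. 0 < a i + e * b i)"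
  using assms
proof (induction I rule: finite_induct)
  case empty
  then show ?case by (intro exI[of _ 1]) auto
next
  case (insert i I)
  then obtain \<epsilon>1 where e1: "\<epsilon>1 > 0" "\<forall>e. 0 < e \<and> e \<le> \<epsilon>1 \<longrightarrow> (\<forall>i\<in>I. 0 < a i + e * b i)" by auto
  have ai: "0 < a i" using insert by auto
  define \<epsilon>2 where "\<epsilon>2 = a i / (2 * (\<bar>b i\<bar> + 1))"
  have e2: "\<epsilon>2 > 0" using ai unfolding \<epsilon>2_def by (simp add: add_pos_nonneg)
  have key: "0 < a i + e * b i" if "0 < e" "e \<le> \<epsilon>2" for e
  proof -
    have "e * \<bar>b i\<bar> \<le> \<epsilon>2 * \<bar>b i\<bar>" using that by (simp add: mult_right_mono)
    also have "\<dots> < a i" unfolding \<epsilon>2_def using ai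
      by (simp add: field_simps) (smt (verit) abs_ge_zero mult_nonneg_nonneg)
    finally have "e * \<bar>b i\<bar> < a i" .
    moreover have "- (e * \<bar>b i\<bar>) \<le> e * b i" using that
      by (metis abs_ge_minus_self abs_mult abs_of_pos minus_le_iff)
    ultimately show ?thesis by linarith
  qed
  show ?case
    by (rule exI[of _ "min \<epsilon>1 \<epsilon>2"]) (use e1 e2 key in auto)
qed

context cw begin

definition Kset where "Kset x = {i. i < m \<and> dv x i = 0}"

lemma dv_M: "x \<in> carrier_vec n \<Longrightarrow> i < m \<Longrightarrow> dv x i = ((A - t0 \<cdot>\<^sub>m B) *\<^sub>v x) $ i"
  using Mx_index[OF A B] unfolding dv_def by simp

lemma M_carrier: "A - t0 \<cdot>\<^sub>m B \<in> carrier_mat m n" using A B unfolding carrier_mat_def by auto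

lemma dv_lin: "x \<in> carrier_vec n \<Longrightarrow> z \<in> carrier_vec n \<Longrightarrow> i < m \<Longrightarrow>
   dv (x + s \<cdot>\<^sub>v z) i = dv x i + s * dv z i"
  using dv_M lin_mv[OF M_carrier] by simp

lemma dv_neg: "z \<in> carrier_vec n \<Longrightarrow> i < m \<Longrightarrow> dv (- z) i = - dv z i"
proof -
  assume z: "z \<in> carrier_vec n" and i: "i < m"
  have "- z = 0\<^sub>v n + (-1) \<cdot>\<^sub>v z" using z by auto
  moreover have "dv (0\<^sub>v n) i = 0" using i A B by (simp add: dv_def mult_mat_vec_def scalar_prod_def)
  ultimately show ?thesis using dv_lin[of "0\<^sub>v n" z i "-1"] z i by simp
qed

lemma supp_sub: "y \<in> carrier_vec n \<Longrightarrow> supp y \<subseteq> {..<n}"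
  unfolding supp_def by auto

lemma adm_supp_ne: "admissible A y \<Longrightarrow> supp y \<noteq> {}"
proof
  assume a: "admissible A y" and e: "supp y = {}"
  have "y = 0\<^sub>v n"
  proof (rule eq_vecI)
    fix j assume "j < dim_vec (0\<^sub>v n)"
    then have j: "j < n" by simp
    have "\<not> 0 < y $ j" using e j a unfolding supp_def adm_iff by auto
    moreover have "0 \<le> y $ j" using a j unfolding adm_iff nonneg_vec_def by auto
    ultimately show "y $ j = 0\<^sub>v n $ j" using j by simp
  qed (use a adm_iff in auto)
  then show False using a adm_iff by simp
qed

lemma out_supp: "admissible A y \<Longrightarrow> j < n \<Longrightarrow> j \<notin> supp y \<Longrightarrow> y $ j = 0"
  unfolding adm_iff supp_def nonneg_vec_def by force

lemma strict_contra:
  assumes y: "weakly_optimal A B y" and z: "z \<in> carrier_vec n"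
    and zs: "\<forall>j<n. j \<notin> supp y \<longrightarrow> z $ j = 0"
    and zk: "\<forall>i<m. dv y i = 0 \<longrightarrow> dv z i < 0"
  shows False
proof -
  have ya: "admissible A y" and yd: "\<forall>i<m. dv y i \<le> 0" using y wo_iff by auto
  have yc: "y \<in> carrier_vec n" using ya adm_iff by auto
  let ?S = "supp y"
  have finS: "finite ?S" using supp_sub[OF yc] finite_subset by blast
  obtain e1 where e1: "e1 > 0" "\<forall>e. 0 < e \<and> e \<le> e1 \<longrightarrow> (\<forall>j\<in>?S. 0 < y $ j + e * z $ j)"
    using eps_exists[OF finS, of "\<lambda>j. y $ j" "\<lambda>j. z $ j"] unfolding supp_def by auto
  let ?N = "{i. i < m \<and> dv y i < 0}"
  obtain e2 where e2: "e2 > 0" "\<forall>e. 0 < e \<and> e \<le> e2 \<longrightarrow> (\<forall>i\<in>?N. 0 < - dv y i + e * (- dv z i))"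
    using eps_exists[of ?N "\<lambda>i. - dv y i" "\<lambda>i. - dv z i"] by auto
  define e where "e = min e1 e2"
  have e: "0 < e" "e \<le> e1" "e \<le> e2" using e1 e2 unfolding e_def by auto
  define x where "x = y + e \<cdot>\<^sub>v z"
  have xc: "x \<in> carrier_vec n" using yc z unfolding x_def by simp
  have xj: "x $ j = y $ j + e * z $ j" if "j < n" for j using that yc z unfolding x_def by simp
  have xpos: "0 < x $ j" if "j \<in> ?S" for j using e1(2) e xj that supp_sub[OF yc] by auto
  have xnn: "nonneg_vec x"
    unfolding nonneg_vec_def
  proof (intro allI impI)
    fix j assume "j < dim_vec x"
    then have j: "j < n" using xc by simp
    show "0 \<le> x $ j"
    proof (cases "j \<in> ?S")
      case True then show ?thesis using xpos by fastforce
    next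
      case False then show ?thesis using xj[OF j] zs j out_supp[OF ya j] by simp
    qed
  qed
  obtain j0 where "j0 \<in> ?S" using adm_supp_ne[OF ya] by blast
  then have "x \<noteq> 0\<^sub>v n" using xpos[of j0] supp_sub[OF yc] by auto
  then have xa: "admissible A x" using xc xnn adm_iff by auto
  have "\<forall>i<m. dv x i < 0"
  proof (intro allI impI)
    fix i assume i: "i < m"
    have dx: "dv x i = dv y i + e * dv z i" unfolding x_def using dv_lin yc z i by simp
    show "dv x i < 0"
    proof (cases "dv y i = 0")
      case True
      then show ?thesis using dx zk i e by (simp add: mult_pos_neg)
    next
      case False
      then have "i \<in> ?N" using yd i by force
      then show ?thesis using e2(2) e dx by force
    qed
  qed
  then show False using no_strict[OF xa] by force
qed

end



context cw begin

lemma wo_adm: "weakly_optimal A B y \<Longrightarrow> admissible A y" using wo_iff by auto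
lemma wo_carrier: "weakly_optimal A B y \<Longrightarrow> y \<in> carrier_vec n" using wo_iff adm_iff by auto
lemma wo_nn: "weakly_optimal A B y \<Longrightarrow> j < n \<Longrightarrow> 0 \<le> y $ j"
  using wo_iff adm_iff nonneg_vec_def by auto

lemma Kset_sub: "Kset x \<subseteq> {..<m}" unfolding Kset_def by auto
lemma Kset_fin: "finite (Kset x)" using Kset_sub finite_subset by blast

lemma move_core:
  assumes y: "weakly_optimal A B y" and z: "z \<in> carrier_vec n"
    and zs: "\<forall>j<n. j \<notin> supp y \<longrightarrow> z $ j = 0"
    and nm: "\<forall>c. \<exists>j<n. z $ j \<noteq> c * y $ j"
    and zk: "\<forall>i<m. dv y i = 0 \<longrightarrow> dv z i = 0"
    and neg: "\<exists>j<n. z $ j < 0"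
  shows "\<exists>x. weakly_optimal A B x \<and> (supp x \<subset> supp y \<or>
            (supp x = supp y \<and> Kset y \<subset> Kset x \<and> (\<exists>i<m. dv z i \<noteq> 0)))"
proof -
  have ya: "admissible A y" using wo_adm[OF y] .
  have yc: "y \<in> carrier_vec n" using wo_carrier[OF y] .
  have yd: "\<forall>i<m. dv y i \<le> 0" using y wo_iff by auto
  let ?S = "supp y"
  have Sn: "?S \<subseteq> {..<n}" using supp_sub[OF yc] .
  have inS: "j \<in> ?S \<longleftrightarrow> j < n \<and> 0 < y $ j" for j unfolding supp_def using yc by auto
  define J where "J = {j. j < n \<and> z $ j < 0}"
  have Jfin: "finite J" unfolding J_def by simp
  have Jne: "J \<noteq> {}" using neg unfolding J_def by auto
  have JS: "J \<subseteq> ?S" unfolding J_def using zs by force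
  define f where "f j = y $ j / (- z $ j)" for j
  define sc where "sc = Min (f ` J)"
  have fpos: "0 < f j" if "j \<in> J" for j
  proof -
    have "0 < y $ j" "0 < - z $ j" using that JS inS unfolding J_def by auto
    then show ?thesis unfolding f_def by (rule divide_pos_pos)
  qed
  have sc_pos: "0 < sc" unfolding sc_def using Jfin Jne fpos by (subst Min_gr_iff) auto
  have sc_le: "sc \<le> f j" if "j \<in> J" for j unfolding sc_def using Jfin that by auto
  have "Min (f ` J) \<in> f ` J" using Jfin Jne by (intro Min_in) auto
  then obtain j0 where j0: "j0 \<in> J" "sc = f j0" unfolding sc_def by auto
  define R where "R = {i. i < m \<and> dv y i < 0 \<and> 0 < dv z i}"
  have Rfin: "finite R" unfolding R_def by simp
  define g where "g i = - dv y i / dv z i" for i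
  have gpos: "0 < g i" if "i \<in> R" for i
  proof -
    have "0 < - dv y i" "0 < dv z i" using that unfolding R_def by auto
    then show ?thesis unfolding g_def by (rule divide_pos_pos)
  qed
  have xj: "(y + s \<cdot>\<^sub>v z) $ j = y $ j + s * z $ j" if "j < n" for j s using that yc z by simp
  have xc: "y + s \<cdot>\<^sub>v z \<in> carrier_vec n" for s using yc z by simp
  have xd: "dv (y + s \<cdot>\<^sub>v z) i = dv y i + s * dv z i" if "i < m" for i s using dv_lin yc z that by simp
  have nonneg: "0 \<le> (y + s \<cdot>\<^sub>v z) $ j" if "0 < s" "s \<le> sc" "j < n" for j s
  proof (cases "j \<in> J")
    case True
    have zn: "0 < - z $ j" using True unfolding J_def by simp
    have "s \<le> f j" using sc_le[OF True] that by simp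
    then have "s * (- z $ j) \<le> y $ j" unfolding f_def using pos_le_divide_eq[OF zn] by blast
    then show ?thesis using xj[OF that(3)] by simp
  next
    case False
    then have "0 \<le> z $ j" using that(3) unfolding J_def by simp
    then show ?thesis using xj[OF that(3)] wo_nn[OF y that(3)] that(1) by simp
  qed
  have rows: "dv (y + s \<cdot>\<^sub>v z) i \<le> 0" if "0 < s" "\<forall>i\<in>R. s \<le> g i" "i < m" for i s
  proof (cases "i \<in> R")
    case True
    then have dz: "0 < dv z i" unfolding R_def by simp
    have "s \<le> g i" using that True by simp
    then have "s * dv z i \<le> - dv y i" unfolding g_def using pos_le_divide_eq[OF dz] by blast
    then show ?thesis using xd[OF that(3)] by simp
  next
    case False
    show ?thesis
    proof (cases "0 < dv z i")
      case True
      then have "dv y i \<noteq> 0" using zk that(3) by auto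
      then have "dv y i < 0" using yd that(3) by force
      then show ?thesis using False True that(3) unfolding R_def by simp
    next
      case False
      then have "s * dv z i \<le> 0" using that(1) by (simp add: mult_nonneg_nonpos)
      moreover have "dv y i \<le> 0" using yd that(3) by blast
      ultimately show ?thesis using xd[OF that(3)] by simp
    qed
  qed
  have outS: "(y + s \<cdot>\<^sub>v z) $ j = 0" if "j < n" "j \<notin> ?S" for j s
    using xj[OF that(1)] zs out_supp[OF ya] that by simp
  have caseA: ?thesis if sR: "\<forall>i\<in>R. sc \<le> g i"
  proof -
    define x where "x = y + sc \<cdot>\<^sub>v z"
    have x0: "x $ j0 = 0"
    proof -
      have zn: "0 < - z $ j0" using j0 unfolding J_def by simp
      have "sc * (- z $ j0) = y $ j0" unfolding j0(2) f_def using zn by (simp add: field_simps)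
      moreover have "j0 < n" using j0 unfolding J_def by simp
      ultimately show ?thesis unfolding x_def using xj[of j0 sc] by simp
    qed
    have xne: "x \<noteq> 0\<^sub>v n"
    proof
      assume x0v: "x = 0\<^sub>v n"
      obtain j where j: "j < n" "z $ j \<noteq> (- 1 / sc) * y $ j" using nm by blast
      have "y $ j + sc * z $ j = 0" using x0v xj[OF j(1), of sc] j unfolding x_def by simp
      then have "z $ j = (- 1 / sc) * y $ j" using sc_pos by (simp add: field_simps)
      then show False using j by simp
    qed
    have xnn: "nonneg_vec x" unfolding nonneg_vec_def
    proof (intro allI impI)
      fix j assume "j < dim_vec x"
      then have "j < n" using z unfolding x_def by simp
      then show "0 \<le> x $ j" unfolding x_def using nonneg[OF sc_pos order.refl] by blast
    qed
    have xa: "admissible A x" using xne xnn xc unfolding x_def adm_iff by auto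
    have xw: "weakly_optimal A B x" using xa rows[OF sc_pos sR] unfolding x_def wo_iff by simp
    have "supp x \<subseteq> ?S"
    proof
      fix j assume "j \<in> supp x"
      then have "j < n" "0 < x $ j" unfolding supp_def x_def using z by auto
      then show "j \<in> ?S" using outS unfolding x_def by force
    qed
    moreover have "j0 \<in> ?S" "j0 \<notin> supp x" using j0 JS x0 unfolding supp_def by auto
    ultimately show ?thesis using xw by blast
  qed
  show ?thesis
  proof (cases "\<forall>i\<in>R. sc \<le> g i")
    case True then show ?thesis using caseA by blast
  next
    case False
    then have Rne: "R \<noteq> {}" by auto
    define sr where "sr = Min (g ` R)"
    have sr_pos: "0 < sr" unfolding sr_def using Rfin Rne gpos by (subst Min_gr_iff) auto
    have sr_le: "\<forall>i\<in>R. sr \<le> g i" unfolding sr_def using Rfin by auto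
    have "Min (g ` R) \<in> g ` R" using Rfin Rne by (intro Min_in) auto
    then obtain i0 where i0: "i0 \<in> R" "sr = g i0" unfolding sr_def by auto
    have sr_lt: "sr < sc" using False sr_le by force
    define x where "x = y + sr \<cdot>\<^sub>v z"
    have xpos: "0 < x $ j" if "j \<in> ?S" for j
    proof -
      have j: "j < n" "0 < y $ j" using that inS by auto
      show ?thesis
      proof (cases "j \<in> J")
        case True
        have zn: "0 < - z $ j" using True unfolding J_def by simp
        have "sr < f j" using sc_le[OF True] sr_lt by simp
        then have "sr * (- z $ j) < y $ j" unfolding f_def using pos_less_divide_eq[OF zn] by blast
        then show ?thesis using xj[OF j(1)] unfolding x_def by simp
      next
        case False
        then have "0 \<le> z $ j" using j unfolding J_def by simp
        then show ?thesis using xj[OF j(1)] j sr_pos unfolding x_def by (simp add: add_pos_nonneg)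
      qed
    qed
    have suppx: "supp x = ?S"
    proof
      show "supp x \<subseteq> ?S"
      proof
        fix j assume "j \<in> supp x"
        then have "j < n" "0 < x $ j" unfolding supp_def x_def using z by auto
        then show "j \<in> ?S" using outS unfolding x_def by force
      qed
      show "?S \<subseteq> supp x" using xpos Sn z yc unfolding supp_def x_def by auto
    qed
    have xnn: "nonneg_vec x" unfolding nonneg_vec_def
    proof (intro allI impI)
      fix j assume "j < dim_vec x"
      then have "j < n" using z unfolding x_def by simp
      then show "0 \<le> x $ j" unfolding x_def using nonneg[OF sr_pos less_imp_le[OF sr_lt]] by blast
    qed
    obtain j1 where "j1 \<in> ?S" using adm_supp_ne[OF ya] by blast
    then have xne: "x \<noteq> 0\<^sub>v n" using xpos[of j1] Sn by auto
    have xa: "admissible A x" using xne xnn xc unfolding x_def adm_iff by auto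
    have xw: "weakly_optimal A B x" using xa rows[OF sr_pos sr_le] unfolding x_def wo_iff by simp
    have "Kset y \<subseteq> Kset x" unfolding Kset_def x_def using xd zk by auto
    moreover have "i0 \<in> Kset x"
    proof -
      have dz: "0 < dv z i0" "i0 < m" using i0 unfolding R_def by auto
      have "sr * dv z i0 = - dv y i0" unfolding i0(2) g_def using dz by (simp add: field_simps)
      then show ?thesis unfolding Kset_def x_def using xd[OF dz(2)] dz(2) by simp
    qed
    moreover have "i0 \<notin> Kset y" using i0 unfolding R_def Kset_def by auto
    moreover have "\<exists>i<m. dv z i \<noteq> 0" using i0 unfolding R_def by force
    ultimately show ?thesis using xw suppx by blast
  qed
qed

end



context cw begin

lemma move:
  assumes y: "weakly_optimal A B y" and z: "z \<in> carrier_vec n"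
    and zs: "\<forall>j<n. j \<notin> supp y \<longrightarrow> z $ j = 0"
    and nm: "\<forall>c. \<exists>j<n. z $ j \<noteq> c * y $ j"
    and zk: "\<forall>i<m. dv y i = 0 \<longrightarrow> dv z i = 0"
  shows "\<exists>x. weakly_optimal A B x \<and> (supp x \<subset> supp y \<or>
            (supp x = supp y \<and> Kset y \<subset> Kset x \<and> (\<exists>i<m. dv z i \<noteq> 0)))"
proof (cases "\<exists>j<n. z $ j < 0")
  case True
  then show ?thesis using move_core[OF y z zs nm zk] by blast
next
  case False
  have z': "- z \<in> carrier_vec n" using z by simp
  have idx: "(- z) $ j = - (z $ j)" if "j < n" for j using z that by simp
  have zs': "\<forall>j<n. j \<notin> supp y \<longrightarrow> (- z) $ j = 0" using zs idx by simp
  have nm': "\<forall>c. \<exists>j<n. (- z) $ j \<noteq> c * y $ j"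
  proof
    fix c
    obtain j where "j < n" "z $ j \<noteq> (- c) * y $ j" using nm by blast
    then show "\<exists>j<n. (- z) $ j \<noteq> c * y $ j" using idx by (intro exI[of _ j]) auto
  qed
  have zk': "\<forall>i<m. dv y i = 0 \<longrightarrow> dv (- z) i = 0" using zk dv_neg[OF z] by simp
  obtain j where j: "j < n" "z $ j \<noteq> 0 * y $ j" using nm by blast
  have "\<not> z $ j < 0" using False j(1) by blast
  then have "0 < z $ j" using j(2) by simp
  then have "(- z) $ j < 0" using idx[OF j(1)] by simp
  then have neg': "\<exists>j<n. (- z) $ j < 0" using j(1) by blast
  obtain x where x: "weakly_optimal A B x" "supp x \<subset> supp y \<or>
            (supp x = supp y \<and> Kset y \<subset> Kset x \<and> (\<exists>i<m. dv (- z) i \<noteq> 0))"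
    using move_core[OF y z' zs' nm' zk' neg'] by blast
  have "(\<exists>i<m. dv (- z) i \<noteq> 0) \<Longrightarrow> (\<exists>i<m. dv z i \<noteq> 0)" using dv_neg[OF z] by auto
  then show ?thesis using x by blast
qed

lemma exists_maxK:
  assumes y0: "weakly_optimal A B y0"
  shows "\<exists>y. weakly_optimal A B y \<and> supp y = supp y0 \<and>
     (\<forall>x. weakly_optimal A B x \<and> supp x = supp y0 \<longrightarrow> card (Kset x) \<le> card (Kset y))"
proof -
  have "\<forall>x. weakly_optimal A B x \<and> supp x = supp y0 \<longrightarrow> card (Kset x) < m + 1"
  proof (intro allI impI)
    fix x
    have "card (Kset x) \<le> card {..<m}" by (rule card_mono) (use Kset_sub in auto)
    then show "card (Kset x) < m + 1" by simp
  qed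
  then have "\<exists>x. (weakly_optimal A B x \<and> supp x = supp y0) \<and>
     (\<forall>y. weakly_optimal A B y \<and> supp y = supp y0 \<longrightarrow> card (Kset y) \<le> card (Kset x))"
    by (intro ex_has_greatest_nat[of "\<lambda>x. weakly_optimal A B x \<and> supp x = supp y0" y0]) (use y0 in auto)
  then show ?thesis by blast
qed

definition MS where "MS S = submatrix (A - t0 \<cdot>\<^sub>m B) UNIV S"

lemma MS_carrier: "S \<subseteq> {..<n} \<Longrightarrow> MS S \<in> carrier_mat m (card S)"
  unfolding MS_def using submatrix_carrier[OF M_carrier] by blast

lemma dvext: "S \<subseteq> {..<n} \<Longrightarrow> u \<in> carrier_vec (card S) \<Longrightarrow> i < m \<Longrightarrow>
   dv (ext n S u) i = (MS S *\<^sub>v u) $ i"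
  unfolding MS_def using dv_M[OF ext_carrier] sub_mult[OF M_carrier] by simp

lemma supp_fin: "weakly_optimal A B y \<Longrightarrow> finite (supp y)"
  using supp_sub[OF wo_carrier] finite_subset by blast

lemma supp_card: assumes "weakly_optimal A B y" shows "1 \<le> card (supp y)"
proof -
  have "0 < card (supp y)" using supp_fin[OF assms] adm_supp_ne[OF wo_adm[OF assms]] by (simp add: card_gt_0_iff)
  then show ?thesis by simp
qed

lemma ext_not_mult:
  assumes y: "weakly_optimal A B y" and u: "u \<in> carrier_vec (card (supp y))"
    and u0: "u \<noteq> 0\<^sub>v (card (supp y))" and ul: "u $ (card (supp y) - 1) = 0"
  shows "\<forall>c. \<exists>j<n. ext n (supp y) u $ j \<noteq> c * y $ j"
proof
  fix c
  let ?S = "supp y" let ?l = "card (supp y)"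
  have Sn: "?S \<subseteq> {..<n}" using supp_sub[OF wo_carrier[OF y]] .
  have l1: "1 \<le> ?l" using supp_card[OF y] .
  show "\<exists>j<n. ext n ?S u $ j \<noteq> c * y $ j"
  proof (cases "c = 0")
    case False
    let ?p = "pick ?S (?l - 1)"
    have pS: "?p \<in> ?S" using pick_in_set[where n="?l - 1" and S="?S"] l1 by simp
    then have pn: "?p < n" "0 < y $ ?p" unfolding supp_def using wo_carrier[OF y] by auto
    have "ext n ?S u $ ?p = 0" using ext_pick[OF Sn, of "?l - 1" u] l1 ul by simp
    then show ?thesis using pn False by (intro exI[of _ ?p]) auto
  next
    case True
    obtain k where k: "k < ?l" "u $ k \<noteq> 0"
    proof -
      have "\<exists>k<?l. u $ k \<noteq> 0"
      proof (rule ccontr)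
        assume "\<not> ?thesis"
        then have "u = 0\<^sub>v ?l" using u by (intro eq_vecI) auto
        then show False using u0 by simp
      qed
      then show ?thesis using that by blast
    qed
    let ?p = "pick ?S k"
    have "?p \<in> ?S" using pick_in_set[where n=k and S="?S"] k by simp
    then have "?p < n" using Sn by auto
    moreover have "ext n ?S u $ ?p = u $ k" using ext_pick[OF Sn k(1)] .
    ultimately show ?thesis using k True by (intro exI[of _ ?p]) auto
  qed
qed

lemma minimal_iff: "minimal_weakly_optimal A B y \<longleftrightarrow> weakly_optimal A B y \<and>
   (\<forall>x. weakly_optimal A B x \<longrightarrow> \<not> supp x \<subset> supp y)"
  unfolding minimal_weakly_optimal_def by blast

lemma rank_lb:
  assumes y: "minimal_weakly_optimal A B y"
  shows "\<not> vec_space.rank m (MS (supp y)) < card (supp y) - 1"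
proof
  assume rk: "vec_space.rank m (MS (supp y)) < card (supp y) - 1"
  have yw: "weakly_optimal A B y" using y minimal_iff by blast
  let ?S = "supp y" let ?l = "card (supp y)"
  have Sn: "?S \<subseteq> {..<n}" using supp_sub[OF wo_carrier[OF yw]] .
  obtain u where u: "u \<in> carrier_vec ?l" "u \<noteq> 0\<^sub>v ?l" "u $ (?l - 1) = 0" "MS ?S *\<^sub>v u = 0\<^sub>v m"
    using kernel_last[OF MS_carrier[OF Sn] supp_card[OF yw] rk] by blast
  define z where "z = ext n ?S u"
  have dz: "dv z i = 0" if "i < m" for i
    unfolding z_def using dvext[OF Sn u(1) that] u(4) that by simp
  have zs: "\<forall>j<n. j \<notin> ?S \<longrightarrow> z $ j = 0" unfolding z_def using ext_out by blast
  have zc: "z \<in> carrier_vec n" unfolding z_def by simp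
  have nm: "\<forall>c. \<exists>j<n. z $ j \<noteq> c * y $ j" unfolding z_def using ext_not_mult[OF yw u(1-3)] .
  have zk: "\<forall>i<m. dv y i = 0 \<longrightarrow> dv z i = 0" using dz by blast
  obtain x where x: "weakly_optimal A B x" "supp x \<subset> ?S \<or>
            (supp x = ?S \<and> Kset y \<subset> Kset x \<and> (\<exists>i<m. dv z i \<noteq> 0))"
    using move[OF yw zc zs nm zk] by blast
  have "\<not> (\<exists>i<m. dv z i \<noteq> 0)" using dz by blast
  then have "supp x \<subset> ?S" using x(2) by blast
  then show False using y minimal_iff x(1) by blast
qed

lemma active_ge:
  assumes y: "weakly_optimal A B y"
    and nosub: "\<forall>x. weakly_optimal A B x \<longrightarrow> \<not> supp x \<subset> supp y"
    and maxK: "\<forall>x. weakly_optimal A B x \<and> supp x = supp y \<longrightarrow> card (Kset x) \<le> card (Kset y)"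
  shows "card (supp y) \<le> card (Kset y)"
proof (rule ccontr)
  assume lt: "\<not> card (supp y) \<le> card (Kset y)"
  let ?S = "supp y" let ?l = "card (supp y)" let ?K = "Kset y" let ?k = "card (Kset y)"
  have Sn: "?S \<subseteq> {..<n}" using supp_sub[OF wo_carrier[OF y]] .
  have Km: "?K \<subseteq> {..<m}" using Kset_sub .
  have MSc: "MS ?S \<in> carrier_mat m ?l" using MS_carrier[OF Sn] .
  let ?MK = "submatrix (MS ?S) ?K UNIV"
  have ck: "card {i. i < dim_row (MS ?S) \<and> i \<in> ?K} = ?k" using card_S[OF Km] MSc by simp
  have MKc: "?MK \<in> carrier_mat ?k ?l"
    using ck MSc unfolding carrier_mat_def by (simp add: dim_submatrix)
  have rowrel: "(MS ?S *\<^sub>v u) $ i = (?MK *\<^sub>v u) $ card {a\<in>?K. a < i}" if "i \<in> ?K" for i u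
  proof -
    have fin: "finite ?K" using Kset_fin .
    have a: "card {a\<in>?K. a < i} < ?k" using card_lt_in[OF fin that] .
    have pk: "pick ?K (card {a\<in>?K. a < i}) = i" using pick_card_in_set[OF that] .
    have im: "i < m" using that Km by auto
    have "(?MK *\<^sub>v u) $ card {a\<in>?K. a < i} = row ?MK (card {a\<in>?K. a < i}) \<bullet> u"
      using a MKc by simp
    also have "\<dots> = row (MS ?S) i \<bullet> u"
      using row_submatrix_UNIV[of "card {a\<in>?K. a < i}" "MS ?S" ?K] a ck pk by simp
    also have "\<dots> = (MS ?S *\<^sub>v u) $ i" using im MSc by simp
    finally show ?thesis by simp
  qed
  have rle: "vec_space.rank ?k ?MK \<le> ?k" using vec_space.rank_le_rows[OF MKc] .
  show False
  proof (cases "vec_space.rank ?k ?MK = ?k")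
    case True
    obtain u where u: "u \<in> carrier_vec ?l" "?MK *\<^sub>v u = vec ?k (\<lambda>_. - 1)"
      using vec_space.rank_full_surj[OF MKc True, of "vec ?k (\<lambda>_. - 1)"] by auto
    define z where "z = ext n ?S u"
    have zs: "\<forall>j<n. j \<notin> ?S \<longrightarrow> z $ j = 0" unfolding z_def using ext_out by blast
    have "\<forall>i<m. dv y i = 0 \<longrightarrow> dv z i < 0"
    proof (intro allI impI)
      fix i assume i: "i < m" "dv y i = 0"
      then have iK: "i \<in> ?K" unfolding Kset_def by simp
      have "dv z i = (MS ?S *\<^sub>v u) $ i" unfolding z_def using dvext[OF Sn u(1) i(1)] .
      also have "\<dots> = (?MK *\<^sub>v u) $ card {a\<in>?K. a < i}" using rowrel[OF iK] .
      also have "\<dots> = - 1" using u(2) card_lt_in[OF Kset_fin iK] by simp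
      finally show "dv z i < 0" by simp
    qed
    then show False using strict_contra[OF y _ zs] unfolding z_def by simp
  next
    case False
    then have rk: "vec_space.rank ?k ?MK < ?l - 1" using rle lt by linarith
    obtain u where u: "u \<in> carrier_vec ?l" "u \<noteq> 0\<^sub>v ?l" "u $ (?l - 1) = 0" "?MK *\<^sub>v u = 0\<^sub>v ?k"
      using kernel_last[OF MKc supp_card[OF y] rk] by blast
    define z where "z = ext n ?S u"
    have zs: "\<forall>j<n. j \<notin> ?S \<longrightarrow> z $ j = 0" unfolding z_def using ext_out by blast
    have zk: "\<forall>i<m. dv y i = 0 \<longrightarrow> dv z i = 0"
    proof (intro allI impI)
      fix i assume i: "i < m" "dv y i = 0"
      then have iK: "i \<in> ?K" unfolding Kset_def by simp
      have "dv z i = (MS ?S *\<^sub>v u) $ i" unfolding z_def using dvext[OF Sn u(1) i(1)] .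
      also have "\<dots> = (?MK *\<^sub>v u) $ card {a\<in>?K. a < i}" using rowrel[OF iK] .
      also have "\<dots> = 0" using u(4) card_lt_in[OF Kset_fin iK] by simp
      finally show "dv z i = 0" .
    qed
    have zc: "z \<in> carrier_vec n" unfolding z_def by simp
    have nm: "\<forall>c. \<exists>j<n. z $ j \<noteq> c * y $ j" unfolding z_def using ext_not_mult[OF y u(1-3)] .
    obtain x where x: "weakly_optimal A B x" "supp x \<subset> ?S \<or>
            (supp x = ?S \<and> Kset y \<subset> Kset x \<and> (\<exists>i<m. dv z i \<noteq> 0))"
      using move[OF y zc zs nm zk] by blast
    show False
    proof (cases "supp x \<subset> ?S")
      case True then show False using nosub x by blast
    next
      case False
      then have sx: "supp x = ?S" and kx: "Kset y \<subset> Kset x" using x(2) by blast+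
      have "card (Kset y) < card (Kset x)" using Kset_fin kx by (rule psubset_card_mono)
      moreover have "card (Kset x) \<le> card (Kset y)" using maxK x(1) sx by blast
      ultimately show False by simp
    qed
  qed
qed

end



context cw begin

lemma dv_smult: "y \<in> carrier_vec n \<Longrightarrow> i < m \<Longrightarrow> dv (c \<cdot>\<^sub>v y) i = c * dv y i"
proof -
  assume y: "y \<in> carrier_vec n" and i: "i < m"
  have "c \<cdot>\<^sub>v y = 0\<^sub>v n + c \<cdot>\<^sub>v y" using y by simp
  moreover have "dv (0\<^sub>v n) i = 0" using i A B by (simp add: dv_def mult_mat_vec_def scalar_prod_def)
  ultimately show ?thesis using dv_lin[of "0\<^sub>v n" y i c] y i by simp
qed

lemma part1: "weakly_optimal A B y \<Longrightarrow> \<exists>i < m. ((A - t0 \<cdot>\<^sub>m B) *\<^sub>v y) $ i = 0"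
proof -
  assume y: "weakly_optimal A B y"
  obtain i where i: "i < m" "0 \<le> dv y i" using no_strict[OF wo_adm[OF y]] by blast
  have "dv y i \<le> 0" using y wo_iff i by blast
  then have "dv y i = 0" using i by simp
  then show ?thesis using dv_M[OF wo_carrier[OF y] i(1)] i by auto
qed

lemma part2: assumes y: "weakly_optimal A B y" and l: "card (supp y) \<ge> m"
  shows "vec_space.rank m (col_submatrix A (supp y) - t0 \<cdot>\<^sub>m col_submatrix B (supp y)) < m"
proof -
  let ?S = "supp y"
  have eq: "col_submatrix A ?S - t0 \<cdot>\<^sub>m col_submatrix B ?S = MS ?S"
    unfolding MS_def by (rule col_sub_eq[OF A B])
  have Sn: "?S \<subseteq> {..<n}" using supp_sub[OF wo_carrier[OF y]] .
  have le: "vec_space.rank m (MS ?S) \<le> m" using vec_space.rank_le_rows[OF MS_carrier[OF Sn]] .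
  have "vec_space.rank m (MS ?S) \<noteq> m"
  proof
    assume r: "vec_space.rank m (MS ?S) = m"
    obtain u where u: "u \<in> carrier_vec (card ?S)" "MS ?S *\<^sub>v u = vec m (\<lambda>_. - 1)"
      using vec_space.rank_full_surj[OF MS_carrier[OF Sn] r, of "vec m (\<lambda>_. - 1)"] by auto
    define z where "z = ext n ?S u"
    have zs: "\<forall>j<n. j \<notin> ?S \<longrightarrow> z $ j = 0" unfolding z_def using ext_out by blast
    have "\<forall>i<m. dv y i = 0 \<longrightarrow> dv z i < 0"
    proof (intro allI impI)
      fix i assume i: "i < m" "dv y i = 0"
      have "dv z i = (MS ?S *\<^sub>v u) $ i" unfolding z_def using dvext[OF Sn u(1) i(1)] .
      then show "dv z i < 0" using u(2) i by simp
    qed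
    then show False using strict_contra[OF y _ zs] unfolding z_def by simp
  qed
  then show ?thesis using le eq by simp
qed

lemma part3: assumes y: "minimal_weakly_optimal A B y" shows "card (supp y) \<le> m"
proof (rule ccontr)
  assume "\<not> card (supp y) \<le> m"
  then have gt: "m < card (supp y)" by simp
  have yw: "weakly_optimal A B y" using y minimal_iff by blast
  have "vec_space.rank m (MS (supp y)) < m"
    using part2[OF yw] gt col_sub_eq[OF A B] unfolding MS_def by simp
  then have "vec_space.rank m (MS (supp y)) < card (supp y) - 1" using gt by linarith
  then show False using rank_lb[OF y] by blast
qed

lemma maxK_minimal:
  assumes y': "minimal_weakly_optimal A B y'"
  obtains y where "weakly_optimal A B y" "supp y = supp y'"
    "\<forall>x. weakly_optimal A B x \<longrightarrow> \<not> supp x \<subset> supp y"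
    "\<forall>x. weakly_optimal A B x \<and> supp x = supp y \<longrightarrow> card (Kset x) \<le> card (Kset y)"
proof -
  have yw': "weakly_optimal A B y'" using y' minimal_iff by blast
  obtain y where y: "weakly_optimal A B y" "supp y = supp y'"
    "\<forall>x. weakly_optimal A B x \<and> supp x = supp y' \<longrightarrow> card (Kset x) \<le> card (Kset y)"
    using exists_maxK[OF yw'] by blast
  have "\<forall>x. weakly_optimal A B x \<longrightarrow> \<not> supp x \<subset> supp y" using y(2) y' minimal_iff by blast
  then show ?thesis using that y by simp
qed

lemma part4: assumes y: "minimal_weakly_optimal A B y" and l: "card (supp y) = m"
  shows "weak_GPF_eigenvector A B y \<and> A *\<^sub>v y = t0 \<cdot>\<^sub>v (B *\<^sub>v y) \<and>
        vec_space.rank m (col_submatrix A (supp y) - t0 \<cdot>\<^sub>m col_submatrix B (supp y)) = m - 1"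
proof -
  have yw: "weakly_optimal A B y" using y minimal_iff by blast
  have yc: "y \<in> carrier_vec n" using wo_carrier[OF yw] .
  obtain ys where ys: "weakly_optimal A B ys" "supp ys = supp y"
    "\<forall>x. weakly_optimal A B x \<longrightarrow> \<not> supp x \<subset> supp ys"
    "\<forall>x. weakly_optimal A B x \<and> supp x = supp ys \<longrightarrow> card (Kset x) \<le> card (Kset ys)"
    using maxK_minimal[OF y] by blast
  have "m \<le> card (Kset ys)" using active_ge[OF ys(1) ys(3) ys(4)] ys(2) l by simp
  then have "Kset ys = {..<m}" using Kset_sub card_subset_eq[of "{..<m}" "Kset ys"] by (metis card_lessThan card_mono finite_lessThan le_antisym)
  then have dys: "\<forall>i<m. dv ys i = 0" unfolding Kset_def by auto
  have ysc: "ys \<in> carrier_vec n" using wo_carrier[OF ys(1)] .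
  have zs: "\<forall>j<n. j \<notin> supp y \<longrightarrow> ys $ j = 0"
    using out_supp[OF wo_adm[OF ys(1)]] ys(2) by blast
  have zk: "\<forall>i<m. dv y i = 0 \<longrightarrow> dv ys i = 0" using dys by blast
  have "\<not> (\<forall>c. \<exists>j<n. ys $ j \<noteq> c * y $ j)"
  proof
    assume nm: "\<forall>c. \<exists>j<n. ys $ j \<noteq> c * y $ j"
    obtain x where x: "weakly_optimal A B x" "supp x \<subset> supp y \<or>
            (supp x = supp y \<and> Kset y \<subset> Kset x \<and> (\<exists>i<m. dv ys i \<noteq> 0))"
      using move[OF yw ysc zs nm zk] by blast
    have "\<not> (\<exists>i<m. dv ys i \<noteq> 0)" using dys by blast
    then have "supp x \<subset> supp y" using x(2) by blast
    then show False using y minimal_iff x(1) by blast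
  qed
  then obtain c where c: "\<forall>j<n. ys $ j = c * y $ j" by blast
  have yseq: "ys = c \<cdot>\<^sub>v y" by (rule eq_vecI) (use c ysc yc in auto)
  have "c \<noteq> 0"
  proof
    assume "c = 0"
    then have "ys = 0\<^sub>v n" using yseq yc by auto
    then show False using wo_adm[OF ys(1)] adm_iff by simp
  qed
  have dy: "dv y i = 0" if "i < m" for i
    using dys that dv_smult[OF yc that, of c] yseq \<open>c \<noteq> 0\<close> by simp
  have eig: "A *\<^sub>v y = t0 \<cdot>\<^sub>v (B *\<^sub>v y)"
  proof (rule eq_vecI)
    show "dim_vec (A *\<^sub>v y) = dim_vec (t0 \<cdot>\<^sub>v (B *\<^sub>v y))" using A B by simp
    fix i assume "i < dim_vec (t0 \<cdot>\<^sub>v (B *\<^sub>v y))"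
    then have i: "i < m" using B by simp
    show "(A *\<^sub>v y) $ i = (t0 \<cdot>\<^sub>v (B *\<^sub>v y)) $ i" using dy[OF i] i B unfolding dv_def by simp
  qed
  have gpf: "weak_GPF_eigenvector A B y"
    unfolding weak_GPF_eigenvector_def using wo_adm[OF yw] fin eig t0_def by simp
  have r1: "vec_space.rank m (MS (supp y)) < m"
    using part2[OF yw] l col_sub_eq[OF A B] unfolding MS_def by simp
  have r2: "\<not> vec_space.rank m (MS (supp y)) < m - 1" using rank_lb[OF y] l by simp
  have "vec_space.rank m (MS (supp y)) = m - 1" using r1 r2 by linarith
  then show ?thesis using gpf eig col_sub_eq[OF A B] unfolding MS_def by simp
qed

lemma part5: assumes y': "minimal_weakly_optimal A B y'" and l: "card (supp y') < m"
  shows "\<exists>y. minimal_weakly_optimal A B y \<and> supp y = supp y' \<and>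
             card {k. k < m \<and> (A *\<^sub>v y) $ k = t0 * (B *\<^sub>v y) $ k} \<ge> card (supp y')"
proof -
  obtain y where y: "weakly_optimal A B y" "supp y = supp y'"
    "\<forall>x. weakly_optimal A B x \<longrightarrow> \<not> supp x \<subset> supp y"
    "\<forall>x. weakly_optimal A B x \<and> supp x = supp y \<longrightarrow> card (Kset x) \<le> card (Kset y)"
    using maxK_minimal[OF y'] by blast
  have "card (supp y) \<le> card (Kset y)" using active_ge[OF y(1) y(3) y(4)] .
  moreover have "Kset y = {k. k < m \<and> (A *\<^sub>v y) $ k = t0 * (B *\<^sub>v y) $ k}"
    unfolding Kset_def dv_def by auto
  moreover have "minimal_weakly_optimal A B y" using y(1) y(3) minimal_iff by blast
  ultimately show ?thesis using y(2) by auto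
qed

lemma main:
  "(\<forall>y. weakly_optimal A B y \<longrightarrow> (\<exists>i < m. ((A - t0 \<cdot>\<^sub>m B) *\<^sub>v y) $ i = 0))
   \<and> (\<forall>y. weakly_optimal A B y \<and> card (supp y) \<ge> m \<longrightarrow>
        vec_space.rank m (col_submatrix A (supp y) - t0 \<cdot>\<^sub>m col_submatrix B (supp y)) < m)
   \<and> (\<forall>y. minimal_weakly_optimal A B y \<longrightarrow> card (supp y) \<le> m)
   \<and> (\<forall>y. minimal_weakly_optimal A B y \<and> card (supp y) = m \<longrightarrow>
        weak_GPF_eigenvector A B y \<and> A *\<^sub>v y = t0 \<cdot>\<^sub>v (B *\<^sub>v y) \<and>
        vec_space.rank m (col_submatrix A (supp y) - t0 \<cdot>\<^sub>m col_submatrix B (supp y)) = m - 1)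
   \<and> (\<forall>y'. minimal_weakly_optimal A B y' \<and> card (supp y') < m \<longrightarrow>
        (\<exists>y. minimal_weakly_optimal A B y \<and> supp y = supp y' \<and>
             card {k. k < m \<and> (A *\<^sub>v y) $ k = t0 * (B *\<^sub>v y) $ k} \<ge> card (supp y')))"
  using part1 part2 part3 part4 part5 by blast

end

theorem theorem5p1:
  fixes A B :: "real mat" and m n :: nat
  assumes "m \<ge> 1" and "n \<ge> 1"
    and "A \<in> carrier_mat m n" and "B \<in> carrier_mat m n"
    and "nonneg_mat A" and "nonneg_mat B"
    and "rho_hat A B < \<infinity>"
  defines "t0 \<equiv> real_of_ereal (rho_hat A B)"
  shows
    "(\<forall>y. weakly_optimal A B y \<longrightarrow> (\<exists>i < m. ((A - t0 \<cdot>\<^sub>m B) *\<^sub>v y) $ i = 0))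
   \<and> (\<forall>y. weakly_optimal A B y \<and> card (supp y) \<ge> m \<longrightarrow>
        vec_space.rank m (col_submatrix A (supp y) - t0 \<cdot>\<^sub>m col_submatrix B (supp y)) < m)
   \<and> (\<forall>y. minimal_weakly_optimal A B y \<longrightarrow> card (supp y) \<le> m)
   \<and> (\<forall>y. minimal_weakly_optimal A B y \<and> card (supp y) = m \<longrightarrow>
        weak_GPF_eigenvector A B y \<and> A *\<^sub>v y = t0 \<cdot>\<^sub>v (B *\<^sub>v y) \<and>
        vec_space.rank m (col_submatrix A (supp y) - t0 \<cdot>\<^sub>m col_submatrix B (supp y)) = m - 1)
   \<and> (\<forall>y'. minimal_weakly_optimal A B y' \<and> card (supp y') < m \<longrightarrow>
        (\<exists>y. minimal_weakly_optimal A B y \<and> supp y = supp y' \<and>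
             card {k. k < m \<and> (A *\<^sub>v y) $ k = t0 * (B *\<^sub>v y) $ k} \<ge> card (supp y')))"
proof -
  have cw: "cw A B m n" by (rule cw.intro) (use assms in auto)
  have "t0 = cw.t0 A B" unfolding t0_def cw.t0_def[OF cw] ..
  then show ?thesis using cw.main[OF cw] by simp
qed


end
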